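(* Let $n\in\mathbb{N}$ and let $\sigma$ be a probability distribution on $[n]$ for which there exists $i\in[n-1]$ with $\sigma_{\le i}\le\frac in$. Let $(t_1^{(s)},\dots,t_n^{(s)})$ be the state of the exponential-jump process with choice distribution $\sigma$ after $s$ steps, started from any fixed initial state. Then $\mathbb{E}[t_n^{(s)}-t_1^{(s)}]\to\infty$ as $s\to\infty$.
   Context: $\sigma_{\le i}=\Pr_{i^*\sim\sigma}[i^*\le i]$. The exponential-jump process: the state consists of $n$ tokens at real positions $t_1<\dots<t_n$. In each step, independently sample $i^*\sim\sigma$ and $X\sim\mathrm{Exp}(1)$ (exponential with rate $1$), move the $i^*$-th token from the left a distance $X$ to the right, and re-sort the positions: $(t_1,\dots,t_n)\mapsto\mathrm{sort}(t_1,\dots,t_{i^*}+X,\dots,t_n)$. *)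

theory Defs
  imports "HOL-Probability.Probability"
begin

text \<open>Positions are stored as a sorted list of length n; token indices are 0-based,
  so the paper's index i in [n] corresponds to i - 1 here.\<close>

definition Exp1 :: "real measure" where
  "Exp1 = density lborel (exponential_density 1)"

definition ej_step :: "real list \<Rightarrow> nat \<times> real \<Rightarrow> real list" where
  "ej_step t ix = sort (t[fst ix := t ! fst ix + snd ix])"

definition ej_state :: "real list \<Rightarrow> (nat \<Rightarrow> nat \<times> real) \<Rightarrow> nat \<Rightarrow> real list" where
  "ej_state t0 \<omega> s = foldl ej_step t0 (map \<omega> [0..<s])"

definition ej_noise :: "nat pmf \<Rightarrow> nat \<Rightarrow> (nat \<Rightarrow> nat \<times> real) measure" where
  "ej_noise \<sigma> s = PiM {..<s} (\<lambda>_. measure_pmf \<sigma> \<Otimes>\<^sub>M Exp1)"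

end

theory Submission
  imports Defs "HOL-Combinatorics.List_Permutation"
begin


lemma sorted_nth_le_iff:
  fixes v :: "real list"
  assumes "sorted v" "k < length v"
  shows "v ! k \<le> c \<longleftrightarrow> Suc k \<le> card {m. m < length v \<and> v ! m \<le> c}"
proof
  assume h: "v ! k \<le> c"
  have "{..k} \<subseteq> {m. m < length v \<and> v ! m \<le> c}"
    using assms h by (auto intro: order_trans[OF sorted_nth_mono[OF assms(1)]])
  from card_mono[OF _ this] show "Suc k \<le> card {m. m < length v \<and> v ! m \<le> c}" by simp
next
  assume h: "Suc k \<le> card {m. m < length v \<and> v ! m \<le> c}"
  show "v ! k \<le> c"
  proof (rule ccontr)
    assume "\<not> v ! k \<le> c"
    have "m < k" if "m < length v" "v ! m \<le> c" for m
    proof (rule ccontr)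
      assume "\<not> m < k"
      then have "v ! k \<le> v ! m" using sorted_nth_mono[OF assms(1), of k m] that by simp
      then show False using that \<open>\<not> v ! k \<le> c\<close> by simp
    qed
    then have "{m. m < length v \<and> v ! m \<le> c} \<subseteq> {..<k}" by blast
    from card_mono[OF _ this] h show False by simp
  qed
qed

lemma card_sort_le:
  fixes u :: "real list"
  shows "card {m. m < length (sort u) \<and> sort u ! m \<le> c} = card {m. m < length u \<and> u ! m \<le> c}"
proof -
  have "length (filter (\<lambda>x. x \<le> c) (sort u)) = length (filter (\<lambda>x. x \<le> c) u)"
    by (simp add: filter_sort)
  then show ?thesis by (simp only: length_filter_conv_card)
qed

lemma meas_sort:
  fixes F :: "'a \<Rightarrow> real list"
  assumes meas: "\<And>m. m < n \<Longrightarrow> (\<lambda>x. F x ! m) \<in> borel_measurable M"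
    and len: "\<And>x. length (F x) = n" and k: "k < n"
  shows "(\<lambda>x. sort (F x) ! k) \<in> borel_measurable M"
proof (subst borel_measurable_iff_le, intro allI)
  fix c :: real
  have eq: "{x \<in> space M. sort (F x) ! k \<le> c} =
     {x \<in> space M. real (Suc k) \<le> (\<Sum>m<n. indicator {..c} (F x ! m))}"
  proof -
    have "sort (F x) ! k \<le> c \<longleftrightarrow> real (Suc k) \<le> (\<Sum>m<n. indicator {..c} (F x ! m))" for x
    proof -
      have "sort (F x) ! k \<le> c \<longleftrightarrow> Suc k \<le> card {m. m < length (F x) \<and> F x ! m \<le> c}"
        using sorted_nth_le_iff[of "sort (F x)" k c] card_sort_le[of "F x" c] len k by simp
      moreover have "card {m. m < length (F x) \<and> F x ! m \<le> c} = (\<Sum>m<n. indicator {..c} (F x ! m) :: real)"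
        using len by (simp add: indicator_def sum.If_cases lessThan_def Int_def conj_commute)
      moreover have "(Suc k \<le> card {m. m < length (F x) \<and> F x ! m \<le> c}) = (real (Suc k) \<le> real (card {m. m < length (F x) \<and> F x ! m \<le> c}))"
        by (rule of_nat_le_iff[symmetric])
      ultimately show ?thesis by (simp only:)
    qed
    then show ?thesis by blast
  qed
  have "(\<lambda>x. (\<Sum>m<n. indicator {..c} (F x ! m) :: real)) \<in> borel_measurable M"
  proof (rule borel_measurable_sum)
    fix m assume "m \<in> {..<n}"
    then show "(\<lambda>x. indicator {..c} (F x ! m) :: real) \<in> borel_measurable M"
      by (intro measurable_compose[OF meas borel_measurable_indicator]) auto
  qed
  then have "\<forall>a. {w \<in> space M. a \<le> (\<Sum>m<n. indicator {..c} (F w ! m) :: real)} \<in> sets M"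
    by (rule borel_measurable_iff_ge[THEN iffD1])
  from this[THEN spec, of "real (Suc k)"] show "{x \<in> space M. sort (F x) ! k \<le> c} \<in> sets M"
    unfolding eq .
qed



lemma ej_state_0[simp]: "ej_state t0 \<omega> 0 = t0"
  by (simp add: ej_state_def)
lemma ej_state_Suc: "ej_state t0 \<omega> (Suc s) = ej_step (ej_state t0 \<omega> s) (\<omega> s)"
  by (simp add: ej_state_def)
lemma ej_state_cong: "(\<And>r. r < s \<Longrightarrow> \<omega> r = \<omega>' r) \<Longrightarrow> ej_state t0 \<omega> s = ej_state t0 \<omega>' s"
  unfolding ej_state_def by (metis (mono_tags, lifting) atLeastLessThan_iff map_eq_conv set_upt)
lemma length_ej_step[simp]: "length (ej_step t y) = length t"
  by (simp add: ej_step_def)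
lemma length_ej_state[simp]: "length (ej_state t0 \<omega> s) = length t0"
  by (induction s) (simp_all add: ej_state_Suc)
lemma sorted_ej_step: "sorted (ej_step t y)"
  by (simp add: ej_step_def)
lemma sorted_ej_state: "sorted t0 \<Longrightarrow> sorted (ej_state t0 \<omega> s)"
  by (cases s) (simp_all add: ej_state_Suc sorted_ej_step)

lemma ej_step_comp:
  assumes "m < length t"
  shows "t[fst y := t ! fst y + snd y] ! m = (if fst y = m then t ! m + snd y else t ! m)"
  using assms by (cases "fst y = m") auto

lemma meas_ej_step:
  fixes T :: "'a \<Rightarrow> real list" and Y :: "'a \<Rightarrow> nat \<times> real"
  assumes T: "\<And>m. m < n \<Longrightarrow> (\<lambda>x. T x ! m) \<in> borel_measurable M"
    and len: "\<And>x. length (T x) = n"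
    and Y1: "(\<lambda>x. fst (Y x)) \<in> measurable M (count_space UNIV)"
    and Y2: "(\<lambda>x. snd (Y x)) \<in> borel_measurable M"
    and k: "k < n"
  shows "(\<lambda>x. ej_step (T x) (Y x) ! k) \<in> borel_measurable M"
  unfolding ej_step_def
proof (rule meas_sort[where n=n])
  fix m assume m: "m < n"
  have eq: "(\<lambda>x. (T x)[fst (Y x) := T x ! fst (Y x) + snd (Y x)] ! m) =
     (\<lambda>x. if fst (Y x) = m then T x ! m + snd (Y x) else T x ! m)"
    using ej_step_comp[of m] len m by auto
  have s: "{x \<in> space M. fst (Y x) = m} \<in> sets M"
    using measurable_sets[OF Y1, of "{m}"] by (simp add: vimage_def Int_def conj_commute)
  show "(\<lambda>x. (T x)[fst (Y x) := T x ! fst (Y x) + snd (Y x)] ! m) \<in> borel_measurable M"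
    unfolding eq
    by (rule measurable_If[OF borel_measurable_add[OF T[OF m] Y2] T[OF m] s])
qed (use len k in auto)

definition nu :: "nat pmf \<Rightarrow> (nat \<times> real) measure" where
  "nu \<sigma> = measure_pmf \<sigma> \<Otimes>\<^sub>M Exp1"

lemma nu_fst: "fst \<in> measurable (nu \<sigma>) (count_space UNIV)"
  unfolding nu_def by measurable
lemma nu_snd: "snd \<in> borel_measurable (nu \<sigma>)"
  unfolding nu_def Exp1_def by measurable

lemma meas_ej_state:
  assumes "s \<le> m" "k < length t0"
  shows "(\<lambda>\<omega>. ej_state t0 \<omega> s ! k) \<in> borel_measurable (PiM {..<m} (\<lambda>_. nu \<sigma>))"
  using assms
proof (induction s arbitrary: k)
  case 0
  then show ?case by simp
next
  case (Suc s)
  have c: "(\<lambda>\<omega>. \<omega> s) \<in> measurable (PiM {..<m} (\<lambda>_. nu \<sigma>)) (nu \<sigma>)"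
    using Suc.prems by (intro measurable_component_singleton) auto
  show ?case unfolding ej_state_Suc
    by (rule meas_ej_step[where n="length t0"])
       (use Suc in \<open>auto intro: measurable_compose[OF c nu_fst] measurable_compose[OF c nu_snd]\<close>)
qed



lemma sorted_sum_prefix_le:
  fixes v :: "real list"
  assumes "sorted v" "J \<subseteq> {..<length v}" "card J = i"
  shows "(\<Sum>k<i. v ! k) \<le> (\<Sum>k\<in>J. v ! k)"
proof (cases "i = 0")
  case True
  then show ?thesis using assms finite_subset[OF assms(2)] by simp
next
  case False
  have fJ: "finite J" using finite_subset[OF assms(2)] by simp
  have iv: "i \<le> length v" using card_mono[OF _ assms(2)] assms(3) by simp
  let ?c = "v ! (i - 1)"
  have c1: "card ({..<i} - J) = card (J - {..<i})"
  proof -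
    have "card ({..<i} - J) = i - card ({..<i} \<inter> J)"
      by (simp add: card_Diff_subset_Int)
    moreover have "card (J - {..<i}) = i - card (J \<inter> {..<i})"
      using fJ assms(3) by (simp add: card_Diff_subset_Int)
    ultimately show ?thesis by (simp add: Int_commute)
  qed
  have b1: "(\<Sum>k\<in>{..<i} - J. v ! k) \<le> of_nat (card ({..<i} - J)) * ?c"
  proof (rule sum_bounded_above)
    fix k assume "k \<in> {..<i} - J"
    then show "v ! k \<le> ?c" using sorted_nth_mono[OF assms(1), of k "i - 1"] iv False by auto
  qed
  have b2: "of_nat (card (J - {..<i})) * ?c \<le> (\<Sum>k\<in>J - {..<i}. v ! k)"
  proof (rule sum_bounded_below)
    fix k assume "k \<in> J - {..<i}"
    then show "?c \<le> v ! k" using sorted_nth_mono[OF assms(1), of "i - 1" k] assms(2) by auto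
  qed
  have s1: "(\<Sum>k<i. v ! k) = (\<Sum>k\<in>{..<i} \<inter> J. v ! k) + (\<Sum>k\<in>{..<i} - J. v ! k)"
    by (metis finite_lessThan sum.Int_Diff)
  have s2: "(\<Sum>k\<in>J. v ! k) = (\<Sum>k\<in>J \<inter> {..<i}. v ! k) + (\<Sum>k\<in>J - {..<i}. v ! k)"
    using fJ by (metis sum.Int_Diff)
  show ?thesis using s1 s2 b1 b2 c1 by (simp add: Int_commute)
qed

lemma sort_sum_prefix_le:
  fixes u :: "real list"
  assumes "I \<subseteq> {..<length u}" "card I = i"
  shows "(\<Sum>k<i. sort u ! k) \<le> (\<Sum>k\<in>I. u ! k)"
proof -
  have "mset (sort u) = mset u" by simp
  from permutation_Ex_bij[OF this] obtain f where
    bij: "bij_betw f {..<length u} {..<length u}" and f: "\<forall>k<length u. sort u ! k = u ! f k"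
    by auto
  define J where "J = inv_into {..<length u} f ` I"
  have fim: "f ` {..<length u} = {..<length u}" and finj: "inj_on f {..<length u}"
    using bij by (auto simp: bij_betw_def)
  have J1: "J \<subseteq> {..<length u}"
  proof
    fix x assume "x \<in> J"
    then obtain y where y: "y \<in> I" "x = inv_into {..<length u} f y" unfolding J_def by auto
    have "y \<in> f ` {..<length u}" using y(1) assms(1) fim by auto
    from inv_into_into[OF this] y(2) show "x \<in> {..<length u}" by simp
  qed
  have J: "J \<subseteq> {..<length u}" "f ` J = I" "inj_on f J"
    using J1 apply simp
    using image_inv_into_cancel[OF fim assms(1)] J_def apply simp
    using inj_on_subset[OF finj J1] .
  have cJ: "card J = i" using card_image[OF J(3)] J(2) assms(2) by simp
  have "(\<Sum>k\<in>I. u ! k) = (\<Sum>k\<in>J. u ! f k)"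
    using sum.reindex[OF J(3), of "\<lambda>k. u ! k"] J(2) by simp
  also have "\<dots> = (\<Sum>k\<in>J. sort u ! k)" using f J(1) by (intro sum.cong) auto
  finally show ?thesis using sorted_sum_prefix_le[of "sort u" J i] J(1) cJ by simp
qed



definition Gap :: "nat \<Rightarrow> real list \<Rightarrow> real" where "Gap n t = t ! (n - 1) - t ! 0"
definition Alow :: "nat \<Rightarrow> real list \<Rightarrow> real" where "Alow i t = (\<Sum>k<i. t ! k)"
definition Stot :: "nat \<Rightarrow> real list \<Rightarrow> real" where "Stot n t = (\<Sum>k<n. t ! k)"
definition Psi :: "nat \<Rightarrow> nat \<Rightarrow> real list \<Rightarrow> real" where
  "Psi n i t = (Stot n t - Alow i t) / real (n - i) - Alow i t / real i"

lemma Stot_list: "length t = n \<Longrightarrow> Stot n t = sum_list t"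
  by (simp add: Stot_def sum_list_sum_nth lessThan_atLeast0)

lemma Stot_sort: "length u = n \<Longrightarrow> Stot n (sort u) = Stot n u"
proof -
  assume l: "length u = n"
  have "sum_list (sort u) = sum_list u"
    by (metis mset_sort sum_mset_sum_list)
  then show ?thesis using l Stot_list[of "sort u" n] Stot_list[of u n] by simp
qed

lemma Stot_upd: "length t = n \<Longrightarrow> j < n \<Longrightarrow> Stot n (t[j := v]) = Stot n t - t ! j + v"
proof -
  assume l: "length t = n" and j: "j < n"
  have "Stot n (t[j := v]) = (\<Sum>k<n. (if k = j then v - t ! j else 0) + t ! k)"
    unfolding Stot_def using l by (intro sum.cong) auto
  also have "\<dots> = (v - t ! j) + Stot n t"
    unfolding Stot_def sum.distrib using j by simp
  finally show ?thesis by simp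
qed

lemma sorted_upper: "sorted t \<Longrightarrow> k < length t \<Longrightarrow> t ! k \<le> t ! (length t - 1)"
  by (simp add: sorted_nth_mono)
lemma sorted_lower: "sorted t \<Longrightarrow> k < length t \<Longrightarrow> t ! 0 \<le> t ! k"
  by (simp add: sorted_nth_mono)

lemma Psi_bounds:
  assumes "sorted t" "length t = n" "0 < i" "i < n"
  shows "0 \<le> Psi n i t" "Psi n i t \<le> Gap n t"
proof -
  define B where "B = (\<Sum>k\<in>{i..<n}. t ! k)"
  have SAB: "Stot n t = Alow i t + B"
    unfolding Stot_def Alow_def B_def using assms(4)
    by (simp add: lessThan_atLeast0 sum.atLeastLessThan_concat)
  have ci: "card {i..<n} = n - i" by simp
  have A1: "Alow i t \<le> real i * t ! (i - 1)"
    unfolding Alow_def using sum_bounded_above[of "{..<i}" "\<lambda>k. t ! k" "t ! (i - 1)"]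
      sorted_nth_mono[OF assms(1)] assms by force
  have B1: "real (n - i) * t ! (i - 1) \<le> B"
    unfolding B_def using sum_bounded_below[of "{i..<n}" "t ! (i - 1)" "\<lambda>k. t ! k"]
      sorted_nth_mono[OF assms(1)] assms by force
  have A2: "real i * t ! 0 \<le> Alow i t"
    unfolding Alow_def using sum_bounded_below[of "{..<i}" "t ! 0" "\<lambda>k. t ! k"]
      sorted_nth_mono[OF assms(1)] assms by force
  have B2: "B \<le> real (n - i) * t ! (n - 1)"
    unfolding B_def using sum_bounded_above[of "{i..<n}" "\<lambda>k. t ! k" "t ! (n - 1)"]
      sorted_nth_mono[OF assms(1)] assms by force
  have P: "Psi n i t = B / real (n - i) - Alow i t / real i"
    unfolding Psi_def SAB by simp
  have ni: "real (n - i) > 0" "real i > 0" using assms by auto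
  have "Alow i t / real i \<le> t ! (i - 1)" using A1 ni by (simp add: divide_le_eq mult.commute)
  moreover have "t ! (i - 1) \<le> B / real (n - i)" using B1 ni by (simp add: le_divide_eq mult.commute)
  ultimately show "0 \<le> Psi n i t" unfolding P by simp
  have "t ! 0 \<le> Alow i t / real i" using A2 ni by (simp add: le_divide_eq mult.commute)
  moreover have "B / real (n - i) \<le> t ! (n - 1)" using B2 ni by (simp add: divide_le_eq mult.commute)
  ultimately show "Psi n i t \<le> Gap n t" unfolding P Gap_def by simp
qed



lemma Alow_step:
  assumes "sorted t" "length t = n" "j < n" "i < n"
  shows "Alow i (sort (t[j := t ! j + x])) \<le> Alow i t + (if j < i then min x (t ! i - t ! j) else 0)"
proof -
  let ?u = "t[j := t ! j + x]"
  have lu: "length ?u = n" using assms by simp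
  have u_ne: "?u ! k = t ! k" if "k \<noteq> j" for k using that by simp
  have I0: "Alow i (sort ?u) \<le> (\<Sum>k<i. ?u ! k)"
    unfolding Alow_def using sort_sum_prefix_le[of "{..<i}" ?u i] lu assms by auto
  show ?thesis
  proof (cases "j < i")
    case False
    have "(\<Sum>k<i. ?u ! k) = Alow i t" unfolding Alow_def using False by (intro sum.cong) auto
    then show ?thesis using I0 False by simp
  next
    case True
    have "(\<Sum>k<i. ?u ! k) = (\<Sum>k<i. (if k = j then x else 0) + t ! k)"
      using assms by (intro sum.cong) auto
    also have "\<dots> = x + Alow i t" unfolding sum.distrib Alow_def using True by simp
    finally have a1: "Alow i (sort ?u) \<le> Alow i t + x" using I0 by simp
    let ?I = "insert i ({..<i} - {j})"
    have cI: "card ?I = i" using True by (simp add: card_Diff_singleton)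
    have Isub: "?I \<subseteq> {..<length ?u}" using assms by auto
    have I1: "Alow i (sort ?u) \<le> (\<Sum>k\<in>?I. ?u ! k)"
      unfolding Alow_def using sort_sum_prefix_le[OF Isub cI] .
    have "(\<Sum>k\<in>?I. ?u ! k) = t ! i + (\<Sum>k\<in>{..<i} - {j}. t ! k)"
      using True by (simp add: u_ne)
    also have "(\<Sum>k\<in>{..<i} - {j}. t ! k) = Alow i t - t ! j"
      unfolding Alow_def using True by (simp add: sum_diff1)
    finally have a2: "Alow i (sort ?u) \<le> Alow i t + (t ! i - t ! j)" using I1 by simp
    show ?thesis using a1 a2 True by simp
  qed
qed

lemma psi_alg: "((X::real) - A) / a - A / b = X / a - A * (1 / a + 1 / b)"
  by (simp add: diff_divide_distrib algebra_simps)

lemma Psi_step: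
  assumes "sorted t" "length t = n" "j < n" "0 < i" "i < n"
  shows "Psi n i (sort (t[j := t ! j + x])) \<ge> Psi n i t + x / real (n - i)
           - (1 / real (n - i) + 1 / real i) * (if j < i then min x (t ! i - t ! j) else 0)"
proof -
  let ?u = "t[j := t ! j + x]"
  define d where "d = (if j < i then min x (t ! i - t ! j) else 0)"
  have S: "Stot n (sort ?u) = Stot n t + x"
    using Stot_sort[of ?u n] Stot_upd[of t n j "t ! j + x"] assms by simp
  have A: "Alow i (sort ?u) \<le> Alow i t + d" using Alow_step[OF assms(1,2,3,5)] d_def by simp
  have ni: "real (n - i) > 0" "real i > 0" using assms by auto
  have P: "Psi n i (sort ?u) = (Stot n t + x) / real (n - i) - Alow i (sort ?u) * (1 / real (n - i) + 1 / real i)"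
    unfolding Psi_def S by (rule psi_alg)
  have P0: "Psi n i t = Stot n t / real (n - i) - Alow i t * (1 / real (n - i) + 1 / real i)"
    unfolding Psi_def by (rule psi_alg)
  have c: "0 \<le> (1 / real (n - i) + 1 / real i)" using ni by simp
  have "Alow i (sort ?u) * (1 / real (n - i) + 1 / real i) \<le> (Alow i t + d) * (1 / real (n - i) + 1 / real i)"
    using mult_right_mono[OF A c] .
  moreover have "(Stot n t + x) / real (n - i) = Stot n t / real (n - i) + x / real (n - i)"
    by (simp add: add_divide_distrib)
  moreover have "(Alow i t + d) * (1 / real (n - i) + 1 / real i) = Alow i t * (1 / real (n - i) + 1 / real i) + (1 / real (n - i) + 1 / real i) * d"
    by (simp only: distrib_right mult.commute)
  ultimately show ?thesis unfolding P P0 d_def[symmetric] by linarith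
qed

lemma Gap_step:
  assumes "sorted t" "length t = n" "0 < n"
  shows "Gap n (sort (t[j := t ! j + x])) \<le> Gap n t + 2 * \<bar>x\<bar>"
proof -
  let ?u = "t[j := t ! j + x]"
  have bnd: "t ! 0 - \<bar>x\<bar> \<le> z \<and> z \<le> t ! (n - 1) + \<bar>x\<bar>" if zu: "z \<in> set ?u" for z
  proof -
    have zi: "z \<in> insert (t ! j + x) (set t)" using subsetD[OF set_update_subset_insert zu] .
    consider "z = t ! j + x" "j < n" | "z \<in> set t"
    proof (cases "j < n")
      case True
      then show ?thesis using zi that by blast
    next
      case False
      then have "?u = t" using assms(2) by (simp add: list_update_beyond not_less)
      then show ?thesis using zu that by (metis (no_types))
    qed
    then show ?thesis
    proof cases
      case 1
      then show ?thesis using sorted_upper[OF assms(1), of j] sorted_lower[OF assms(1), of j] assms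
        by auto
    next
      case 2
      then obtain k where "k < n" "z = t ! k" using assms by (auto simp: in_set_conv_nth)
      then show ?thesis using sorted_upper[OF assms(1), of k] sorted_lower[OF assms(1), of k] assms
        by auto
    qed
  qed
  have l: "length (sort ?u) = n" using assms by simp
  have "sort ?u ! (n - 1) \<in> set ?u" "sort ?u ! 0 \<in> set ?u"
    using nth_mem[of "n - 1" "sort ?u"] nth_mem[of 0 "sort ?u"] l assms by auto
  then have "sort ?u ! (n - 1) \<le> t ! (n - 1) + \<bar>x\<bar>" "t ! 0 - \<bar>x\<bar> \<le> sort ?u ! 0"
    using bnd by blast+
  then show ?thesis unfolding Gap_def by simp
qed



lemma Exp1_prob: "prob_space Exp1"
  unfolding Exp1_def by (rule prob_space_exponential_density) simp
lemma Exp1_distr: "distributed Exp1 lborel (\<lambda>x. x) (exponential_density 1)"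
  unfolding distributed_def Exp1_def
  apply (auto simp: exponential_density_def)
  apply (subst distr_id2) apply auto
  done
lemma Exp1_int: "integrable Exp1 (\<lambda>x. x)" "(\<integral>x. x \<partial>Exp1) = 1"
  using prob_space.erlang_ith_moment_integrable[OF Exp1_prob _ Exp1_distr, of 1]
     prob_space.erlang_ith_moment[OF Exp1_prob _ Exp1_distr, of 1] by auto
lemma Exp1_gt: "a \<ge> 0 \<Longrightarrow> measure Exp1 {x. a < x} = exp (-a)"
  using prob_space.exponential_distributedD_gt[OF Exp1_prob Exp1_distr, of a]
  by (simp add: Exp1_def)
lemma sets_Exp1[simp]: "sets Exp1 = sets borel"
  by (simp add: Exp1_def)

lemma Exp1_sf: "sigma_finite_measure Exp1"
  using Exp1_prob prob_space_imp_sigma_finite by blast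

lemma nu_prob: "prob_space (nu \<sigma>)"
  unfolding nu_def by (intro prob_space_pair Exp1_prob prob_space_measure_pmf)

lemma nu_decomp:
  assumes f: "f \<in> borel_measurable (nu \<sigma>)" and supp: "set_pmf \<sigma> \<subseteq> {..<n}"
  shows "(\<integral>\<^sup>+y. f y \<partial>nu \<sigma>) = (\<Sum>j<n. (\<integral>\<^sup>+x. f (j, x) \<partial>Exp1) * pmf \<sigma> j)"
proof -
  have "(\<integral>\<^sup>+y. f y \<partial>nu \<sigma>) = (\<integral>\<^sup>+j. \<integral>\<^sup>+x. f (j, x) \<partial>Exp1 \<partial>measure_pmf \<sigma>)"
    using sigma_finite_measure.nn_integral_fst[OF Exp1_sf, of f "measure_pmf \<sigma>"] f
    unfolding nu_def by simp
  also have "\<dots> = (\<Sum>j<n. (\<integral>\<^sup>+x. f (j, x) \<partial>Exp1) * pmf \<sigma> j)"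
    using supp by (intro nn_integral_measure_pmf_support) auto
  finally show ?thesis .
qed

lemma meas_Exp1_slice:
  assumes "f \<in> borel_measurable (nu \<sigma>)"
  shows "(\<lambda>x. f (j, x)) \<in> borel_measurable Exp1"
proof -
  have "(\<lambda>x. (j, x)) \<in> measurable Exp1 (nu \<sigma>)"
    unfolding nu_def Exp1_def by measurable
  from measurable_compose[OF this assms] show ?thesis .
qed

lemma meas_Psi:
  assumes "\<And>k. k < n \<Longrightarrow> (\<lambda>x. T x ! k) \<in> borel_measurable M" "i \<le> n"
  shows "(\<lambda>x. Psi n i (T x)) \<in> borel_measurable M"
proof -
  have a: "(\<lambda>x. Alow i (T x)) \<in> borel_measurable M"
    unfolding Alow_def using assms by (intro borel_measurable_sum) auto
  have s: "(\<lambda>x. Stot n (T x)) \<in> borel_measurable M"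
    unfolding Stot_def using assms by (intro borel_measurable_sum) auto
  show ?thesis unfolding Psi_def using a s by measurable
qed

lemma meas_Gap:
  assumes "\<And>k. k < n \<Longrightarrow> (\<lambda>x. T x ! k) \<in> borel_measurable M" "0 < n"
  shows "(\<lambda>x. Gap n (T x)) \<in> borel_measurable M"
  unfolding Gap_def using assms by (intro borel_measurable_diff) auto



lemma Exp1_id_meas: "(\<lambda>x::real. x) \<in> borel_measurable Exp1"
  by (simp add: measurable_cong_sets[OF sets_Exp1 refl])

lemma meas_step_slice:
  assumes "length t = n" "k < n"
  shows "(\<lambda>x. ej_step t (j, x) ! k) \<in> borel_measurable Exp1"
  by (rule meas_ej_step[where n=n]) (use assms Exp1_id_meas in auto)

lemma Gap_nonneg: "sorted t \<Longrightarrow> length t = n \<Longrightarrow> 0 < n \<Longrightarrow> 0 \<le> Gap n t"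
  unfolding Gap_def using sorted_nth_mono[of t 0 "n - 1"] by simp

locale ejp =
  fixes n i :: nat and \<sigma> :: "nat pmf" and t0 :: "real list"
  assumes supp: "set_pmf \<sigma> \<subseteq> {..<n}" and ipos: "0 < i" and ilt: "i < n"
    and ple: "measure_pmf.prob \<sigma> {..<i} \<le> real i / real n"
    and len: "length t0 = n" and sorted0: "sorted t0"
begin

definition "p = measure_pmf.prob \<sigma> {..<i}"
definition "c = 1 / real (n - i) + 1 / real i"
definition "\<delta> = 1 / real (n - i) - c * p * (1 - exp (-1))"

lemma c_pos: "0 < c" unfolding c_def by (intro add_pos_pos divide_pos_pos) (use ipos ilt in auto)
lemma p_nonneg: "0 \<le> p" unfolding p_def by simp
lemma cp_le: "c * p \<le> 1 / real (n - i)"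
proof -
  have ni: "real (n - i) > 0" "real i > 0" "real n > 0" using ipos ilt by auto
  have "c * p \<le> c * (real i / real n)" using mult_left_mono[OF ple less_imp_le[OF c_pos]] unfolding p_def .
  also have "c * (real i / real n) = 1 / real (n - i)"
    unfolding c_def using ni ilt by (simp add: field_simps of_nat_diff)
  finally show ?thesis .
qed
lemma delta_pos: "0 < \<delta>"
proof (cases "c * p = 0")
  case True
  have "\<delta> = 1 / real (n - i)" unfolding \<delta>_def using True by simp
  then show ?thesis using ilt by simp
next
  case False
  then have "c * p > 0" using c_pos p_nonneg by simp
  moreover have "1 - exp (-1) < (1::real)" by simp
  ultimately have "c * p * (1 - exp (-1)) < c * p * 1" by (intro mult_strict_left_mono)
  then have "c * p * (1 - exp (-1)) < c * p" by simp
  then show ?thesis unfolding \<delta>_def using cp_le by (simp add: mult.assoc)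
qed

lemma p_sum: "p = (\<Sum>j<i. pmf \<sigma> j)"
  unfolding p_def by (simp add: measure_measure_pmf_finite)

lemma one_sum: "(\<Sum>j<n. pmf \<sigma> j) = 1"
  using sum_pmf_eq_1[of "{..<n}" \<sigma>] supp by simp

lemma step_slice_int:
  assumes t: "sorted t" "length t = n" and j: "j < n"
  shows "integrable Exp1 (\<lambda>x. Psi n i (ej_step t (j, x)))"
    "Psi n i t + 1 / real (n - i) - c * (if j < i then 1 else 0)
      + c * (if j < i then 1 else 0) * exp (- (Gap n t + 1))
     \<le> (\<integral>x. Psi n i (ej_step t (j, x)) \<partial>Exp1)"
proof -
  interpret E: prob_space Exp1 by (rule Exp1_prob)
  have n0: "0 < n" using ilt by simp
  have mh: "(\<lambda>x. Psi n i (ej_step t (j, x))) \<in> borel_measurable Exp1"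
    by (rule meas_Psi[where n=n]) (use meas_step_slice t ilt in auto)
  have ix: "integrable Exp1 (\<lambda>x. x)" by (rule Exp1_int(1))
  have ib: "integrable Exp1 (\<lambda>x. Gap n t + 2 * \<bar>x\<bar>)"
    using ix by (intro Bochner_Integration.integrable_add integrable_mult_right integrable_abs) auto
  have bnd: "0 \<le> Psi n i (ej_step t (j, x)) \<and> Psi n i (ej_step t (j, x)) \<le> Gap n t + 2 * \<bar>x\<bar>" for x
  proof -
    have s: "sorted (ej_step t (j, x))" "length (ej_step t (j, x)) = n"
      using sorted_ej_step t by auto
    have "Gap n (ej_step t (j, x)) \<le> Gap n t + 2 * \<bar>x\<bar>"
      using Gap_step[OF t n0, of j x] unfolding ej_step_def by simp
    then show ?thesis using Psi_bounds[OF s ipos ilt] by simp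
  qed
  show ih: "integrable Exp1 (\<lambda>x. Psi n i (ej_step t (j, x)))"
  proof (rule Bochner_Integration.integrable_bound[OF ib mh])
    show "AE x in Exp1. norm (Psi n i (ej_step t (j, x))) \<le> norm (Gap n t + 2 * \<bar>x\<bar>)"
    proof (intro AE_I2)
      fix x
      have "norm (Psi n i (ej_step t (j, x))) = Psi n i (ej_step t (j, x))" using bnd[of x] by simp
      also have "\<dots> \<le> Gap n t + 2 * \<bar>x\<bar>" using bnd[of x] by simp
      also have "\<dots> \<le> norm (Gap n t + 2 * \<bar>x\<bar>)" by simp
      finally show "norm (Psi n i (ej_step t (j, x))) \<le> norm (Gap n t + 2 * \<bar>x\<bar>)" .
    qed
  qed
  define b :: real where "b = (if j < i then 1 else 0)"
  define G where "G = Gap n t"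
  have G0: "0 \<le> G" unfolding G_def using Gap_nonneg[OF t n0] .
  define L where "L = (\<lambda>x. Psi n i t + (1 / real (n - i) - c * b) * x + c * b * indicator {x. G + 1 < x} x)"
  have low: "L x \<le> Psi n i (ej_step t (j, x))" for x
  proof -
    have ps: "Psi n i (ej_step t (j, x)) \<ge> Psi n i t + x / real (n - i)
           - c * (if j < i then min x (t ! i - t ! j) else 0)"
      using Psi_step[OF t j ipos ilt, of x] unfolding ej_step_def c_def by simp
    show ?thesis
    proof (cases "j < i")
      case True
      have d: "t ! i - t ! j \<le> G"
        unfolding G_def Gap_def using sorted_nth_mono[OF t(1), of i "n - 1"] sorted_nth_mono[OF t(1), of 0 j] t ilt True
        by (simp add: less_Suc_eq_le[symmetric])
      have "min x (t ! i - t ! j) \<le> x - indicator {x. G + 1 < x} x"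
        using d by (auto simp: indicator_def)
      then have "c * min x (t ! i - t ! j) \<le> c * (x - indicator {x. G + 1 < x} x)"
        using c_pos by (intro mult_left_mono) auto
      then show ?thesis using ps True unfolding L_def b_def
        by (simp add: algebra_simps)
    next
      case False
      then show ?thesis using ps unfolding L_def b_def by simp
    qed
  qed
  have ss: "{x. G + 1 < x} \<in> sets Exp1"
  proof -
    have "{x. G + 1 < x} = {G + 1<..}" by auto
    then show ?thesis by simp
  qed
  have iind: "integrable Exp1 (\<lambda>x. indicator {x. G + 1 < x} x :: real)"
  proof (rule E.integrable_const_bound[where B=1])
    show "AE x in Exp1. norm (indicator {x. G + 1 < x} x :: real) \<le> 1" by (auto simp: indicator_def)
    show "(\<lambda>x. indicator {x. G + 1 < x} x :: real) \<in> borel_measurable Exp1"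
      using borel_measurable_indicator[OF ss] by (simp add: fun_eq_iff)
  qed
  define a where "a = 1 / real (n - i) - c * b"
  define K where "K = c * b"
  have i1: "integrable Exp1 (\<lambda>x. Psi n i t + a * x)"
    by (intro Bochner_Integration.integrable_add E.integrable_const integrable_mult_right ix)
  have i2: "integrable Exp1 (\<lambda>x. K * indicator {x. G + 1 < x} x)"
    by (intro integrable_mult_right iind)
  have Leq: "L = (\<lambda>x. (Psi n i t + a * x) + K * indicator {x. G + 1 < x} x)"
    unfolding L_def a_def K_def by simp
  have iL: "integrable Exp1 L"
    unfolding Leq by (intro Bochner_Integration.integrable_add i1 i2)
  have mi: "measure Exp1 ({x. G + 1 < x} \<inter> space Exp1) = exp (- (G + 1))"
    using Exp1_gt[of "G + 1"] G0 by (simp add: Exp1_def)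
  have e1: "(\<integral>x. Psi n i t + a * x \<partial>Exp1) = Psi n i t + a"
    using Bochner_Integration.integral_add[OF E.integrable_const integrable_mult_right[OF ix], of "Psi n i t" a]
      Exp1_int(2) E.prob_space by simp
  have e2: "(\<integral>x. K * indicator {x. G + 1 < x} x \<partial>Exp1) = K * exp (- (G + 1))"
    using mi by simp
  have "(\<integral>x. L x \<partial>Exp1) = Psi n i t + a + K * exp (- (G + 1))"
    unfolding Leq Bochner_Integration.integral_add[OF i1 i2] e1 e2 ..
  then have "(\<integral>x. L x \<partial>Exp1) = Psi n i t + (1 / real (n - i) - c * b) + c * b * exp (- (G + 1))"
    unfolding a_def K_def .
  moreover have "(\<integral>x. L x \<partial>Exp1) \<le> (\<integral>x. Psi n i (ej_step t (j, x)) \<partial>Exp1)"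
    by (intro integral_mono[OF iL ih] low)
  ultimately show "Psi n i t + 1 / real (n - i) - c * (if j < i then 1 else 0)
      + c * (if j < i then 1 else 0) * exp (- (Gap n t + 1))
     \<le> (\<integral>x. Psi n i (ej_step t (j, x)) \<partial>Exp1)"
    unfolding b_def G_def by simp
qed

lemma meas_Psi_step_nu:
  assumes "length t = n"
  shows "(\<lambda>y. Psi n i (ej_step t y)) \<in> borel_measurable (nu \<sigma>)"
  by (rule meas_Psi[where n=n]) (use meas_ej_step[where n=n and Y="\<lambda>y. y"] assms nu_fst nu_snd ilt in auto)

lemma meas_Gap_step_nu:
  assumes "length t = n"
  shows "(\<lambda>y. Gap n (ej_step t y)) \<in> borel_measurable (nu \<sigma>)"
  by (rule meas_Gap[where n=n]) (use meas_ej_step[where n=n and Y="\<lambda>y. y"] assms nu_fst nu_snd ilt in auto)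

lemma step_Psi:
  assumes t: "sorted t" "length t = n"
  shows "ennreal (Psi n i t + \<delta> * exp (- Gap n t)) \<le> (\<integral>\<^sup>+y. ennreal (Psi n i (ej_step t y)) \<partial>nu \<sigma>)"
proof -
  interpret E: prob_space Exp1 by (rule Exp1_prob)
  have n0: "0 < n" using ilt by simp
  define I where "I j = (\<integral>x. Psi n i (ej_step t (j, x)) \<partial>Exp1)" for j
  define b :: "nat \<Rightarrow> real" where "b j = (if j < i then 1 else 0)" for j
  define G where "G = Gap n t"
  define Q where "Q = Psi n i t"
  define E where "E = exp (- (G + 1))"
  have nonneg: "0 \<le> Psi n i (ej_step t y)" for y
    using Psi_bounds(1)[OF sorted_ej_step _ ipos ilt] t by simp
  have I0: "0 \<le> I j" for j unfolding I_def using nonneg by simp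
  have Ilow: "Q + 1 / real (n - i) - c * b j + c * b j * E \<le> I j" if "j < n" for j
    using step_slice_int(2)[OF t that] unfolding I_def Q_def b_def E_def G_def .
  have mf: "(\<lambda>y. ennreal (Psi n i (ej_step t y))) \<in> borel_measurable (nu \<sigma>)"
    using meas_Psi_step_nu[OF t(2)] by measurable
  have "(\<integral>\<^sup>+y. ennreal (Psi n i (ej_step t y)) \<partial>nu \<sigma>)
      = (\<Sum>j<n. (\<integral>\<^sup>+x. ennreal (Psi n i (ej_step t (j, x))) \<partial>Exp1) * pmf \<sigma> j)"
    by (rule nu_decomp[OF mf supp])
  also have "\<dots> = (\<Sum>j<n. ennreal (I j * pmf \<sigma> j))"
  proof (rule sum.cong[OF refl])
    fix j assume "j \<in> {..<n}"
    then have "(\<integral>\<^sup>+x. ennreal (Psi n i (ej_step t (j, x))) \<partial>Exp1) = ennreal (I j)"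
      unfolding I_def using step_slice_int(1)[OF t, of j] nonneg
      by (intro nn_integral_eq_integral) auto
    then show "(\<integral>\<^sup>+x. ennreal (Psi n i (ej_step t (j, x))) \<partial>Exp1) * pmf \<sigma> j = ennreal (I j * pmf \<sigma> j)"
      using I0 by (simp add: ennreal_mult)
  qed
  also have "\<dots> = ennreal (\<Sum>j<n. I j * pmf \<sigma> j)"
    using I0 by (intro sum_ennreal) simp
  finally have eq: "(\<integral>\<^sup>+y. ennreal (Psi n i (ej_step t y)) \<partial>nu \<sigma>) = ennreal (\<Sum>j<n. I j * pmf \<sigma> j)" .
  have "(\<Sum>j<n. (Q + 1 / real (n - i) - c * b j + c * b j * E) * pmf \<sigma> j) \<le> (\<Sum>j<n. I j * pmf \<sigma> j)"
    using Ilow by (intro sum_mono mult_right_mono) auto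
  moreover have "(\<Sum>j<n. (Q + 1 / real (n - i) - c * b j + c * b j * E) * pmf \<sigma> j)
      = (Q + 1 / real (n - i)) * (\<Sum>j<n. pmf \<sigma> j) - c * (1 - E) * (\<Sum>j<n. b j * pmf \<sigma> j)"
  proof -
    have "(\<Sum>j<n. (Q + 1 / real (n - i) - c * b j + c * b j * E) * pmf \<sigma> j)
       = (\<Sum>j<n. (Q + 1 / real (n - i)) * pmf \<sigma> j - c * (1 - E) * (b j * pmf \<sigma> j))"
      by (intro sum.cong) (simp_all add: algebra_simps)
    also have "\<dots> = (Q + 1 / real (n - i)) * (\<Sum>j<n. pmf \<sigma> j) - c * (1 - E) * (\<Sum>j<n. b j * pmf \<sigma> j)"
      by (simp add: sum_subtractf sum_distrib_left)
    finally show ?thesis .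
  qed
  moreover have "(\<Sum>j<n. b j * pmf \<sigma> j) = p"
  proof -
    have "(\<Sum>j<n. b j * pmf \<sigma> j) = (\<Sum>j\<in>{j \<in> {..<n}. j < i}. pmf \<sigma> j)"
    proof -
      have "(\<Sum>j<n. b j * pmf \<sigma> j) = (\<Sum>j<n. if j < i then pmf \<sigma> j else 0)"
        unfolding b_def by (intro sum.cong) auto
      then show ?thesis by (simp add: sum.inter_filter[symmetric])
    qed
    also have "{j \<in> {..<n}. j < i} = {..<i}" using ilt by auto
    finally show ?thesis using p_sum by simp
  qed
  ultimately have low: "Q + 1 / real (n - i) - c * (1 - E) * p \<le> (\<Sum>j<n. I j * pmf \<sigma> j)"
    using one_sum by simp
  have G0: "0 \<le> G" unfolding G_def using Gap_nonneg[OF t n0] .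
  have EG: "E = exp (-1) * exp (- G)" unfolding E_def by (simp add: exp_add[symmetric])
  have eg1: "exp (- G) \<le> 1" using G0 by simp
  have cp: "0 \<le> 1 / real (n - i) - c * p" using cp_le by simp
  have "(1 / real (n - i) - c * p) * exp (- G) \<le> (1 / real (n - i) - c * p) * 1"
    using mult_left_mono[OF eg1 cp] .
  then have "Q + \<delta> * exp (- G) \<le> Q + 1 / real (n - i) - c * (1 - E) * p"
    unfolding \<delta>_def EG by (simp add: algebra_simps)
  then have "Q + \<delta> * exp (- G) \<le> (\<Sum>j<n. I j * pmf \<sigma> j)" using low by (rule order_trans)
  then show ?thesis unfolding eq Q_def G_def by (rule ennreal_leI)
qed

lemma K_fin: "(\<integral>\<^sup>+y. ennreal (2 * \<bar>snd y\<bar>) \<partial>nu \<sigma>) < \<infinity>"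
proof -
  have mf: "(\<lambda>y. ennreal (2 * \<bar>snd y\<bar>)) \<in> borel_measurable (nu \<sigma>)"
    using nu_snd by measurable
  have ia: "integrable Exp1 (\<lambda>x. 2 * \<bar>x\<bar>)"
    using Exp1_int(1) by (intro integrable_mult_right integrable_abs)
  have f: "(\<integral>\<^sup>+x. ennreal (2 * \<bar>x\<bar>) \<partial>Exp1) < \<infinity>"
    using integrableD(2)[OF ia] by (simp add: less_top)
  have "(\<integral>\<^sup>+y. ennreal (2 * \<bar>snd y\<bar>) \<partial>nu \<sigma>) = (\<Sum>j<n. (\<integral>\<^sup>+x. ennreal (2 * \<bar>x\<bar>) \<partial>Exp1) * pmf \<sigma> j)"
    using nu_decomp[OF mf supp] by simp
  also have "\<dots> < \<infinity>" using f by (simp add: ennreal_mult_less_top)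
  finally show ?thesis .
qed

definition "K = (\<integral>\<^sup>+y. ennreal (2 * \<bar>snd y\<bar>) \<partial>nu \<sigma>)"

lemma step_Gap:
  assumes t: "sorted t" "length t = n"
  shows "(\<integral>\<^sup>+y. ennreal (Gap n (ej_step t y)) \<partial>nu \<sigma>) \<le> ennreal (Gap n t) + K"
proof -
  interpret N: prob_space "nu \<sigma>" by (rule nu_prob)
  have n0: "0 < n" using ilt by simp
  have "(\<integral>\<^sup>+y. ennreal (Gap n (ej_step t y)) \<partial>nu \<sigma>) \<le> (\<integral>\<^sup>+y. ennreal (Gap n t) + ennreal (2 * \<bar>snd y\<bar>) \<partial>nu \<sigma>)"
  proof (rule nn_integral_mono)
    fix y :: "nat \<times> real"
    have "Gap n (ej_step t y) \<le> Gap n t + 2 * \<bar>snd y\<bar>"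
      using Gap_step[OF t n0, of "fst y" "snd y"] unfolding ej_step_def by simp
    then show "ennreal (Gap n (ej_step t y)) \<le> ennreal (Gap n t) + ennreal (2 * \<bar>snd y\<bar>)"
      using Gap_nonneg[OF t n0] by (simp add: ennreal_plus[symmetric] del: ennreal_plus)
  qed
  also have "\<dots> = ennreal (Gap n t) + K"
    unfolding K_def using nu_snd by (subst nn_integral_add) (auto simp: N.emeasure_space_1)
  finally show ?thesis .
qed

end


lemma noise_eq: "ej_noise \<sigma> s = PiM {..<s} (\<lambda>_. nu \<sigma>)"
  unfolding ej_noise_def nu_def ..

lemma psf: "product_sigma_finite (\<lambda>_. nu \<sigma>)"
  unfolding product_sigma_finite_def using nu_prob prob_space_imp_sigma_finite by blast

lemma noise_prob: "prob_space (ej_noise \<sigma> s)"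
  unfolding noise_eq by (intro prob_space_PiM nu_prob)

lemma PiM_step:
  assumes f: "(\<lambda>\<omega>. f (ej_state t0 \<omega> (Suc s))) \<in> borel_measurable (PiM {..<Suc s} (\<lambda>_. nu \<sigma>))"
  shows "(\<integral>\<^sup>+\<omega>. f (ej_state t0 \<omega> (Suc s)) \<partial>ej_noise \<sigma> (Suc s))
       = (\<integral>\<^sup>+\<omega>. (\<integral>\<^sup>+y. f (ej_step (ej_state t0 \<omega> s) y) \<partial>nu \<sigma>) \<partial>ej_noise \<sigma> s)"
proof -
  interpret P: product_sigma_finite "\<lambda>_. nu \<sigma>" by (rule psf)
  have ins: "{..<Suc s} = insert s {..<s}" by auto
  have "(\<integral>\<^sup>+\<omega>. f (ej_state t0 \<omega> (Suc s)) \<partial>ej_noise \<sigma> (Suc s))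
      = (\<integral>\<^sup>+\<omega>. (\<integral>\<^sup>+y. f (ej_state t0 (fun_upd \<omega> s y) (Suc s)) \<partial>nu \<sigma>) \<partial>PiM {..<s} (\<lambda>_. nu \<sigma>))"
    unfolding noise_eq using P.product_nn_integral_insert[of "{..<s}" s "\<lambda>\<omega>. f (ej_state t0 \<omega> (Suc s))"] f
    unfolding ins by simp
  also have "\<dots> = (\<integral>\<^sup>+\<omega>. (\<integral>\<^sup>+y. f (ej_step (ej_state t0 \<omega> s) y) \<partial>nu \<sigma>) \<partial>PiM {..<s} (\<lambda>_. nu \<sigma>))"
  proof (intro nn_integral_cong)
    fix \<omega> y
    have "ej_state t0 (fun_upd \<omega> s y) s = ej_state t0 \<omega> s" by (rule ej_state_cong) simp
    then show "f (ej_state t0 (fun_upd \<omega> s y) (Suc s)) = f (ej_step (ej_state t0 \<omega> s) y)"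
      by (simp add: ej_state_Suc)
  qed
  finally show ?thesis unfolding noise_eq .
qed

context ejp
begin

lemma meas_state_Psi: "s \<le> m \<Longrightarrow> (\<lambda>\<omega>. Psi n i (ej_state t0 \<omega> s)) \<in> borel_measurable (PiM {..<m} (\<lambda>_. nu \<sigma>))"
  by (rule meas_Psi[where n=n]) (use meas_ej_state len ilt in auto)
lemma meas_state_Gap: "s \<le> m \<Longrightarrow> (\<lambda>\<omega>. Gap n (ej_state t0 \<omega> s)) \<in> borel_measurable (PiM {..<m} (\<lambda>_. nu \<sigma>))"
  by (rule meas_Gap[where n=n]) (use meas_ej_state len ilt in auto)

lemma state_props: "sorted (ej_state t0 \<omega> s)" "length (ej_state t0 \<omega> s) = n"
  using sorted_ej_state[OF sorted0] len by auto

definition "Pe s = (\<integral>\<^sup>+\<omega>. ennreal (Psi n i (ej_state t0 \<omega> s)) \<partial>ej_noise \<sigma> s)"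
definition "Ge s = (\<integral>\<^sup>+\<omega>. ennreal (Gap n (ej_state t0 \<omega> s)) \<partial>ej_noise \<sigma> s)"
definition "Ee s = (\<integral>\<^sup>+\<omega>. ennreal (exp (- Gap n (ej_state t0 \<omega> s))) \<partial>ej_noise \<sigma> s)"

lemma Pe_step: "Pe s + ennreal \<delta> * Ee s \<le> Pe (Suc s)"
proof -
  have mP: "(\<lambda>\<omega>. ennreal (Psi n i (ej_state t0 \<omega> (Suc s)))) \<in> borel_measurable (PiM {..<Suc s} (\<lambda>_. nu \<sigma>))"
    using meas_state_Psi[of "Suc s" "Suc s"] by measurable
  have mP': "(\<lambda>\<omega>. ennreal (Psi n i (ej_state t0 \<omega> s))) \<in> borel_measurable (ej_noise \<sigma> s)"
    unfolding noise_eq using meas_state_Psi[of s s] by measurable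
  have mE: "(\<lambda>\<omega>. ennreal \<delta> * ennreal (exp (- Gap n (ej_state t0 \<omega> s)))) \<in> borel_measurable (ej_noise \<sigma> s)"
    unfolding noise_eq using meas_state_Gap[of s s] by measurable
  have "Pe s + ennreal \<delta> * Ee s
     = (\<integral>\<^sup>+\<omega>. ennreal (Psi n i (ej_state t0 \<omega> s)) + ennreal \<delta> * ennreal (exp (- Gap n (ej_state t0 \<omega> s))) \<partial>ej_noise \<sigma> s)"
  proof -
    have mE0: "(\<lambda>\<omega>. ennreal (exp (- Gap n (ej_state t0 \<omega> s)))) \<in> borel_measurable (ej_noise \<sigma> s)"
      unfolding noise_eq using meas_state_Gap[of s s] by measurable
    show ?thesis unfolding Pe_def Ee_def
      by (simp only: nn_integral_cmult[OF mE0, symmetric] nn_integral_add[OF mP' mE, symmetric])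
  qed
  also have "\<dots> \<le> (\<integral>\<^sup>+\<omega>. (\<integral>\<^sup>+y. ennreal (Psi n i (ej_step (ej_state t0 \<omega> s) y)) \<partial>nu \<sigma>) \<partial>ej_noise \<sigma> s)"
  proof (intro nn_integral_mono)
    fix \<omega>
    have "ennreal (Psi n i (ej_state t0 \<omega> s)) + ennreal \<delta> * ennreal (exp (- Gap n (ej_state t0 \<omega> s)))
        = ennreal (Psi n i (ej_state t0 \<omega> s) + \<delta> * exp (- Gap n (ej_state t0 \<omega> s)))"
      using Psi_bounds(1)[OF state_props ipos ilt] delta_pos
      by (simp add: ennreal_plus ennreal_mult)
    also have "\<dots> \<le> (\<integral>\<^sup>+y. ennreal (Psi n i (ej_step (ej_state t0 \<omega> s) y)) \<partial>nu \<sigma>)"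
      by (rule step_Psi[OF state_props])
    finally show "ennreal (Psi n i (ej_state t0 \<omega> s)) + ennreal \<delta> * ennreal (exp (- Gap n (ej_state t0 \<omega> s)))
        \<le> (\<integral>\<^sup>+y. ennreal (Psi n i (ej_step (ej_state t0 \<omega> s) y)) \<partial>nu \<sigma>)" .
  qed
  also have "\<dots> = Pe (Suc s)"
    unfolding Pe_def by (rule PiM_step[symmetric, OF mP])
  finally show ?thesis .
qed

lemma Ge_step: "Ge (Suc s) \<le> Ge s + K"
proof -
  interpret N: prob_space "ej_noise \<sigma> s" by (rule noise_prob)
  have mG: "(\<lambda>\<omega>. ennreal (Gap n (ej_state t0 \<omega> (Suc s)))) \<in> borel_measurable (PiM {..<Suc s} (\<lambda>_. nu \<sigma>))"
    using meas_state_Gap[of "Suc s" "Suc s"] by measurable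
  have mG': "(\<lambda>\<omega>. ennreal (Gap n (ej_state t0 \<omega> s))) \<in> borel_measurable (ej_noise \<sigma> s)"
    unfolding noise_eq using meas_state_Gap[of s s] by measurable
  have "Ge (Suc s) = (\<integral>\<^sup>+\<omega>. (\<integral>\<^sup>+y. ennreal (Gap n (ej_step (ej_state t0 \<omega> s) y)) \<partial>nu \<sigma>) \<partial>ej_noise \<sigma> s)"
    unfolding Ge_def by (rule PiM_step[OF mG])
  also have "\<dots> \<le> (\<integral>\<^sup>+\<omega>. ennreal (Gap n (ej_state t0 \<omega> s)) + K \<partial>ej_noise \<sigma> s)"
    by (intro nn_integral_mono step_Gap state_props)
  also have "\<dots> = Ge s + K"
    unfolding Ge_def using mG' by (simp add: nn_integral_add N.emeasure_space_1)
  finally show ?thesis .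
qed

end


lemma infinite_count:
  fixes S :: "nat set"
  assumes "infinite S"
  shows "\<exists>s\<in>S. K0 \<le> card (S \<inter> {..<s})"
proof -
  obtain T where T: "T \<subseteq> S" "finite T" "card T = Suc K0"
    using infinite_arbitrarily_large[OF assms] by blast
  then have Tne: "T \<noteq> {}" by auto
  define s where "s = Max T"
  have sT: "s \<in> T" unfolding s_def using T Tne by simp
  have sub: "T - {s} \<subseteq> S \<inter> {..<s}"
  proof
    fix x assume x: "x \<in> T - {s}"
    then have "x \<le> s" unfolding s_def using T by simp
    then show "x \<in> S \<inter> {..<s}" using x T by auto
  qed
  have "card (T - {s}) = K0" using T sT by simp
  then have "K0 \<le> card (S \<inter> {..<s})" using card_mono[OF _ sub] by simp
  then show ?thesis using sT T by blast
qed

context ejp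
begin

lemma Pe_0: "Pe 0 = ennreal (Psi n i t0)"
proof -
  interpret N: prob_space "ej_noise \<sigma> 0" by (rule noise_prob)
  show ?thesis unfolding Pe_def by (simp add: N.emeasure_space_1)
qed

lemma Ge_0: "Ge 0 = ennreal (Gap n t0)"
proof -
  interpret N: prob_space "ej_noise \<sigma> 0" by (rule noise_prob)
  show ?thesis unfolding Ge_def by (simp add: N.emeasure_space_1)
qed

lemma Pe_sum: "ennreal (Psi n i t0) + ennreal \<delta> * (\<Sum>s<N. Ee s) \<le> Pe N"
proof (induction N)
  case 0
  then show ?case by (simp add: Pe_0)
next
  case (Suc N)
  have "ennreal (Psi n i t0) + ennreal \<delta> * (\<Sum>s<Suc N. Ee s)
      = (ennreal (Psi n i t0) + ennreal \<delta> * (\<Sum>s<N. Ee s)) + ennreal \<delta> * Ee N"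
    by (simp add: distrib_left add.assoc)
  also have "\<dots> \<le> Pe N + ennreal \<delta> * Ee N" using Suc by (intro add_right_mono)
  also have "\<dots> \<le> Pe (Suc N)" by (rule Pe_step)
  finally show ?case .
qed

lemma Ge_bound: "Ge s \<le> ennreal (Gap n t0) + of_nat s * K"
proof (induction s)
  case 0
  then show ?case by (simp add: Ge_0)
next
  case (Suc s)
  have "Ge (Suc s) \<le> Ge s + K" by (rule Ge_step)
  also have "\<dots> \<le> ennreal (Gap n t0) + of_nat s * K + K" using Suc by (intro add_right_mono)
  also have "\<dots> = ennreal (Gap n t0) + of_nat (Suc s) * K" by (simp add: algebra_simps)
  finally show ?case .
qed

lemma Ge_fin: "Ge s < \<infinity>"
proof -
  have "K < \<infinity>" unfolding K_def by (rule K_fin)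
  then have "ennreal (Gap n t0) + of_nat s * K < \<infinity>"
    by (simp add: ennreal_mult_less_top of_nat_less_top)
  then show ?thesis using Ge_bound[of s] by (rule le_less_trans[rotated])
qed

lemma Pe_le_Ge: "Pe s \<le> Ge s"
  unfolding Pe_def Ge_def
  by (intro nn_integral_mono ennreal_leI Psi_bounds(2)[OF state_props ipos ilt])

definition "g s = (\<integral>\<omega>. Gap n (ej_state t0 \<omega> s) \<partial>ej_noise \<sigma> s)"

lemma mGs: "(\<lambda>\<omega>. Gap n (ej_state t0 \<omega> s)) \<in> borel_measurable (ej_noise \<sigma> s)"
  unfolding noise_eq by (rule meas_state_Gap) simp

lemma Gap_state_nonneg: "0 \<le> Gap n (ej_state t0 \<omega> s)"
  using Gap_nonneg[OF state_props] ilt by simp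

lemma g_int: "integrable (ej_noise \<sigma> s) (\<lambda>\<omega>. Gap n (ej_state t0 \<omega> s))"
  using Ge_fin[of s] unfolding Ge_def
  by (intro integrableI_nonneg mGs) (auto simp: Gap_state_nonneg)

lemma Ge_eq: "Ge s = ennreal (g s)"
  unfolding Ge_def g_def using g_int Gap_state_nonneg
  by (intro nn_integral_eq_integral) auto

lemma Ee_low:
  assumes M: "0 \<le> M" "g s \<le> M"
  shows "ennreal (exp (- M)) \<le> Ee s"
proof -
  interpret N: prob_space "ej_noise \<sigma> s" by (rule noise_prob)
  have mE: "(\<lambda>\<omega>. exp (- Gap n (ej_state t0 \<omega> s))) \<in> borel_measurable (ej_noise \<sigma> s)"
    using mGs by measurable
  have iE: "integrable (ej_noise \<sigma> s) (\<lambda>\<omega>. exp (- Gap n (ej_state t0 \<omega> s)))"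
    by (rule N.integrable_const_bound[where B=1]) (use mE Gap_state_nonneg in auto)
  have iL: "integrable (ej_noise \<sigma> s) (\<lambda>\<omega>. exp (- M) * (1 + M) - exp (- M) * Gap n (ej_state t0 \<omega> s))"
    using g_int by (intro Bochner_Integration.integrable_diff N.integrable_const integrable_mult_right)
  have pw: "exp (- M) * (1 + M) - exp (- M) * Gap n (ej_state t0 \<omega> s) \<le> exp (- Gap n (ej_state t0 \<omega> s))" for \<omega>
  proof -
    have "1 + (M - Gap n (ej_state t0 \<omega> s)) \<le> exp (M - Gap n (ej_state t0 \<omega> s))" by (rule exp_ge_add_one_self)
    then have "exp (- M) * (1 + (M - Gap n (ej_state t0 \<omega> s))) \<le> exp (- M) * exp (M - Gap n (ej_state t0 \<omega> s))"
      by (intro mult_left_mono) auto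
    also have "exp (- M) * exp (M - Gap n (ej_state t0 \<omega> s)) = exp (- Gap n (ej_state t0 \<omega> s))"
      by (simp add: exp_add[symmetric])
    finally show ?thesis by (simp add: algebra_simps)
  qed
  have "(\<integral>\<omega>. exp (- M) * (1 + M) - exp (- M) * Gap n (ej_state t0 \<omega> s) \<partial>ej_noise \<sigma> s)
      = exp (- M) * (1 + M) - exp (- M) * g s"
    unfolding g_def
    using Bochner_Integration.integral_diff[OF N.integrable_const integrable_mult_right[OF g_int], of "exp (- M) * (1 + M)" "exp (- M)"]
      N.prob_space by simp
  also have "\<dots> \<ge> exp (- M)"
  proof -
    have "exp (- M) * g s \<le> exp (- M) * M" using M by (intro mult_left_mono) auto
    then show ?thesis by (simp add: algebra_simps)
  qed
  finally have "exp (- M) \<le> (\<integral>\<omega>. exp (- Gap n (ej_state t0 \<omega> s)) \<partial>ej_noise \<sigma> s)"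
    using integral_mono[OF iL iE pw] by linarith
  moreover have "Ee s = ennreal (\<integral>\<omega>. exp (- Gap n (ej_state t0 \<omega> s)) \<partial>ej_noise \<sigma> s)"
    unfolding Ee_def using iE by (intro nn_integral_eq_integral) auto
  ultimately show ?thesis by (simp add: ennreal_leI)
qed

lemma g_lim: "filterlim g at_top sequentially"
proof (rule ccontr)
  assume "\<not> filterlim g at_top sequentially"
  then obtain Z where Z: "\<not> eventually (\<lambda>s. Z \<le> g s) sequentially"
    unfolding filterlim_at_top by blast
  define M where "M = max Z 0"
  have M0: "0 \<le> M" unfolding M_def by simp
  define S where "S = {s. g s \<le> M}"
  have infS: "infinite S"
    unfolding infinite_nat_iff_unbounded_le
  proof
    fix m
    from Z have "\<not> (\<forall>s\<ge>m. Z \<le> g s)" unfolding eventually_sequentially by blast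
    then obtain s where "s \<ge> m" "g s < Z" by (auto simp: not_le)
    then show "\<exists>s\<ge>m. s \<in> S" unfolding S_def M_def by force
  qed
  define e where "e = \<delta> * exp (- M)"
  have e0: "0 < e" unfolding e_def using delta_pos by simp
  obtain K0 :: nat where K0: "M / e < real K0" using reals_Archimedean2 by blast
  obtain s' where s': "s' \<in> S" "K0 \<le> card (S \<inter> {..<s'})" using infinite_count[OF infS] by blast
  define C where "C = card (S \<inter> {..<s'})"
  have "ennreal \<delta> * (of_nat C * ennreal (exp (- M))) = ennreal \<delta> * (\<Sum>s\<in>S \<inter> {..<s'}. ennreal (exp (- M)))"
    unfolding C_def by simp
  also have "\<dots> \<le> ennreal \<delta> * (\<Sum>s\<in>S \<inter> {..<s'}. Ee s)"
    by (intro mult_left_mono sum_mono Ee_low[OF M0]) (auto simp: S_def)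
  also have "\<dots> \<le> ennreal \<delta> * (\<Sum>s<s'. Ee s)"
    by (intro mult_left_mono sum_mono2) auto
  also have "\<dots> \<le> ennreal (Psi n i t0) + ennreal \<delta> * (\<Sum>s<s'. Ee s)" by simp
  also have "\<dots> \<le> Pe s'" by (rule Pe_sum)
  also have "\<dots> \<le> Ge s'" by (rule Pe_le_Ge)
  also have "\<dots> = ennreal (g s')" by (rule Ge_eq)
  finally have "ennreal (\<delta> * (real C * exp (- M))) \<le> ennreal (g s')"
    using delta_pos by (simp add: ennreal_mult ennreal_of_nat_eq_real_of_nat)
  then have "\<delta> * (real C * exp (- M)) \<le> g s'"
    using g_def Ge_eq by (subst (asm) ennreal_le_iff) (auto simp: Gap_state_nonneg intro!: integral_nonneg_AE)
  then have "e * real C \<le> M" using s' unfolding S_def e_def by (simp add: algebra_simps)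
  moreover have "M < e * real C"
  proof -
    have "M < e * real K0" using K0 e0 by (simp add: divide_less_eq mult.commute)
    also have "\<dots> \<le> e * real C" using s'(2) e0 unfolding C_def by simp
    finally show ?thesis .
  qed
  ultimately show False by simp
qed

end

theorem lemma12:
  fixes n :: nat and \<sigma> :: "nat pmf" and t0 :: "real list"
  assumes supp: "set_pmf \<sigma> \<subseteq> {..<n}"
    and ex_i: "\<exists>i\<in>{1..n-1}. measure_pmf.prob \<sigma> {..<i} \<le> real i / real n"
    and len: "length t0 = n"
    and sorted0: "sorted_wrt (<) t0"
  shows "filterlim (\<lambda>s. \<integral>\<omega>. (ej_state t0 \<omega> s ! (n - 1) - ej_state t0 \<omega> s ! 0) \<partial>ej_noise \<sigma> s)
           at_top sequentially"
proof -
  obtain i where i: "i \<in> {1..n-1}" "measure_pmf.prob \<sigma> {..<i} \<le> real i / real n"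
    using ex_i by blast
  have i0: "0 < i" and ilt: "i < n" using i(1) by auto
  have "sorted_wrt (\<le>) t0" by (rule sorted_wrt_mono_rel[OF _ sorted0]) simp
  then have st: "sorted t0" .
  interpret E: ejp n i \<sigma> t0
    by unfold_locales (use supp i0 ilt i(2) len st in auto)
  have eq: "(\<lambda>s. \<integral>\<omega>. (ej_state t0 \<omega> s ! (n - 1) - ej_state t0 \<omega> s ! 0) \<partial>ej_noise \<sigma> s) = E.g"
    unfolding E.g_def Gap_def ..
  show ?thesis unfolding eq by (rule E.g_lim)
qed

end
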